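(* Let $F=F(N,\mathcal D)$ be a connected GSC and let $i,j\in\mathcal D$ be distinct. Then $\varphi_i(F)\cap\varphi_j(F)$ is a singleton if and only if there is exactly one pair $(i',j')\in\mathcal D\times\mathcal D$ such that $\varphi_{ii'}(F)\cap\varphi_{jj'}(F)\ne\varnothing$. Moreover, if this holds and $i'$ is a corner digit, then $j'$ is also a corner digit.
   Context: GSC: $N\ge2$, $\mathcal D\subset\{0,\dots,N-1\}^2$ with $1<|\mathcal D|<N^2$, $\varphi_i(x)=\frac1N(x+i)$, $F$ the attractor $F=\bigcup_{i\in\mathcal D}\varphi_i(F)$; $\varphi_{ii'}=\varphi_i\circ\varphi_{i'}$. A digit $i\in\mathcal D$ is a corner digit if $i\in\{(0,0),(0,N-1),(N-1,0),(N-1,N-1)\}$. *)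

theory Defs
  imports "HOL-Analysis.Analysis"
begin

definition gsc_map :: "nat \<Rightarrow> nat \<times> nat \<Rightarrow> real \<times> real \<Rightarrow> real \<times> real" where
  "gsc_map N i x = ((fst x + real (fst i)) / real N, (snd x + real (snd i)) / real N)"

definition gsc_digits :: "nat \<Rightarrow> (nat \<times> nat) set \<Rightarrow> bool" where
  "gsc_digits N D \<longleftrightarrow> 2 \<le> N \<and> D \<subseteq> {0..<N} \<times> {0..<N} \<and> 1 < card D \<and> card D < N ^ 2"

definition gsc_attractor :: "nat \<Rightarrow> (nat \<times> nat) set \<Rightarrow> (real \<times> real) set" where
  "gsc_attractor N D = (THE F. compact F \<and> F \<noteq> {} \<and> F = (\<Union>i\<in>D. gsc_map N i ` F))"

definition corner_digit :: "nat \<Rightarrow> nat \<times> nat \<Rightarrow> bool" where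
  "corner_digit N i \<longleftrightarrow> i \<in> {(0,0), (0,N-1), (N-1,0), (N-1,N-1)}"

end

theory Submission
  imports Defs
begin

lemma gsc_map_scale: "gsc_map N i x = scaleR (1/real N) (x + (real (fst i), real (snd i)))"
  by (cases x) (simp add: gsc_map_def divide_inverse mult.commute)

lemma gsc_map_dist: "dist (gsc_map N i x) (gsc_map N i y) = dist x y / real N"
proof -
  have "gsc_map N i x - gsc_map N i y = scaleR (1/real N) (x - y)"
    by (simp add: gsc_map_scale algebra_simps)
  then show ?thesis by (simp add: dist_norm)
qed

lemma gsc_map_cont: "continuous_on S (gsc_map N i)"
  unfolding gsc_map_def divide_inverse by (intro continuous_intros)

lemma gsc_map_eq_iff: "N > 0 \<Longrightarrow> gsc_map N a x = gsc_map N b y \<longleftrightarrow>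
   fst x + real (fst a) = fst y + real (fst b) \<and> snd x + real (snd a) = snd y + real (snd b)"
  by (cases x, cases y) (simp add: gsc_map_def divide_cancel_right)

lemma gsc_map_inj: "N > 0 \<Longrightarrow> gsc_map N a x = gsc_map N a y \<longleftrightarrow> x = y"
  by (cases x, cases y) (simp add: gsc_map_eq_iff)

definition HT :: "nat \<Rightarrow> (nat\<times>nat) set \<Rightarrow> (real\<times>real) set \<Rightarrow> (real\<times>real) set" where
  "HT N D S = (\<Union>d\<in>D. gsc_map N d ` S)"

lemma HT_mono: "S \<subseteq> T \<Longrightarrow> HT N D S \<subseteq> HT N D T"
  unfolding HT_def by auto

lemma HT_compact: "finite D \<Longrightarrow> compact S \<Longrightarrow> compact (HT N D S)"
  unfolding HT_def by (intro compact_UN compact_continuous_image gsc_map_cont) auto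

lemma unique_inv:
  assumes N2: "N \<ge> 2" and G: "compact G" "G \<noteq> {}" "HT N D G = G"
    and H: "compact H" "H \<noteq> {}" "HT N D H = H"
  shows "G \<subseteq> H"
proof -
  have N: "N > 0" using N2 by simp
  have cH: "closed H" using H compact_imp_closed by auto
  have "continuous_on G (\<lambda>x. infdist x H)" by (intro continuous_intros)
  then obtain x where x: "x \<in> G" and mx: "\<And>y. y \<in> G \<Longrightarrow> infdist y H \<le> infdist x H"
    using continuous_attains_sup[OF G(1) G(2)] by blast
  have "x \<in> (\<Union>d\<in>D. gsc_map N d ` G)" using x G(3) unfolding HT_def by simp
  then obtain d g where d: "d \<in> D" and g: "g \<in> G" and xg: "x = gsc_map N d g"
    by blast
  obtain h where h: "h \<in> H" and hm: "\<And>y. y \<in> H \<Longrightarrow> dist g h \<le> dist g y"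
    using distance_attains_inf[OF cH H(2)] by metis
  have "infdist g H = dist g h"
  proof (rule antisym)
    show "infdist g H \<le> dist g h" using h by (rule infdist_le)
    show "dist g h \<le> infdist g H" using H(2) hm unfolding infdist_def by (auto intro!: cINF_greatest)
  qed
  have hH: "gsc_map N d h \<in> H" using H(3) d h unfolding HT_def by auto
  have "infdist x H \<le> dist x (gsc_map N d h)" using hH by (rule infdist_le)
  also have "\<dots> = dist g h / real N" using xg gsc_map_dist by simp
  also have "\<dots> = infdist g H / real N" using \<open>infdist g H = dist g h\<close> by simp
  also have "\<dots> \<le> infdist x H / real N" using mx[OF g] N by (simp add: divide_right_mono)
  finally have le: "infdist x H \<le> infdist x H / real N" .
  have "infdist x H \<le> 0"
  proof (rule ccontr)
    assume "\<not> infdist x H \<le> 0"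
    then have p: "infdist x H > 0" by simp
    from le have a: "infdist x H * real N \<le> infdist x H" using N by (simp add: field_simps)
    have "infdist x H * 2 \<le> infdist x H * real N" using p N2 by (intro mult_left_mono) auto
    with a p show False by linarith
  qed
  show ?thesis
  proof
    fix y assume "y \<in> G"
    then have "infdist y H \<le> 0" using mx \<open>infdist x H \<le> 0\<close> by (meson order_trans)
    then have "infdist y H = 0" using infdist_nonneg[of y H] by linarith
    then show "y \<in> H" using in_closed_iff_infdist_zero[OF cH H(2)] by simp
  qed
qed

definition QQ :: "(real\<times>real) set" where "QQ = {0..1} \<times> {0..1}"

lemma HT_QQ: assumes "D \<subseteq> {0..<N}\<times>{0..<N}" "N > 0" shows "HT N D QQ \<subseteq> QQ"
proof
  fix x assume "x \<in> HT N D QQ"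
  then obtain d y where d: "d \<in> D" and y: "y \<in> QQ" and xy: "x = gsc_map N d y"
    unfolding HT_def by blast
  have d1: "fst d + 1 \<le> N" "snd d + 1 \<le> N" using d assms(1) by auto
  then have r: "real (fst d) + 1 \<le> real N" "real (snd d) + 1 \<le> real N"
    by (metis of_nat_1 of_nat_add of_nat_le_iff)+
  show "x \<in> QQ" using y r assms(2) unfolding xy QQ_def gsc_map_def
    by (auto simp: divide_simps)
qed

lemma iter_facts:
  assumes D: "D \<subseteq> {0..<N}\<times>{0..<N}" "finite D" "D \<noteq> {}" and N: "N > 0"
  shows "compact ((HT N D ^^ n) QQ)" "(HT N D ^^ n) QQ \<noteq> {}"
    "(HT N D ^^ Suc n) QQ \<subseteq> (HT N D ^^ n) QQ"
proof -
  show "compact ((HT N D ^^ n) QQ)"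
    by (induction n) (auto simp: QQ_def compact_Times HT_compact D)
  show "(HT N D ^^ n) QQ \<noteq> {}"
  proof (induction n)
    case 0 then show ?case by (auto simp: QQ_def)
  next
    case (Suc n)
    then obtain y where "y \<in> (HT N D ^^ n) QQ" by blast
    moreover obtain d where "d \<in> D" using D(3) by blast
    ultimately have "gsc_map N d y \<in> (HT N D ^^ Suc n) QQ" by (auto simp: HT_def)
    then show ?case by blast
  qed
  show "(HT N D ^^ Suc n) QQ \<subseteq> (HT N D ^^ n) QQ"
  proof (induction n)
    case 0 then show ?case using HT_QQ[OF D(1) N] by simp
  next
    case (Suc n) then show ?case by (simp add: HT_mono)
  qed
qed

lemma iter_antimono:
  assumes D: "D \<subseteq> {0..<N}\<times>{0..<N}" "finite D" "D \<noteq> {}" and N: "N > 0" and "m \<le> n"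
  shows "(HT N D ^^ n) QQ \<subseteq> (HT N D ^^ m) QQ"
  using assms(5)
proof (induction n)
  case 0 then show ?case by simp
next
  case (Suc n)
  show ?case
  proof (cases "m = Suc n")
    case False then have "m \<le> n" using Suc by simp
    then show ?thesis using Suc iter_facts(3)[OF D N, of n] by blast
  qed simp
qed

lemma existence:
  assumes D: "D \<subseteq> {0..<N}\<times>{0..<N}" "finite D" "D \<noteq> {}" and N: "N > 0"
  defines "K \<equiv> \<Inter>n. (HT N D ^^ n) QQ"
  shows "compact K" "K \<noteq> {}" "HT N D K = K" "K \<subseteq> QQ"
proof -
  note it = iter_facts[OF D N] iter_antimono[OF D N]
  show "compact K" unfolding K_def by (rule compact_Inter) (auto simp: it)
  show "K \<noteq> {}" unfolding K_def by (rule compact_nest) (auto simp: it)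
  show "K \<subseteq> QQ" unfolding K_def by (metis INT_lower UNIV_I funpow_0)
  show "HT N D K = K"
  proof
    show "HT N D K \<subseteq> K"
    proof
      fix x assume "x \<in> HT N D K"
      then obtain d y where d: "d \<in> D" and y: "y \<in> K" and xy: "x = gsc_map N d y"
        unfolding HT_def by blast
      show "x \<in> K" unfolding K_def
      proof
        fix n
        have "x \<in> (HT N D ^^ Suc n) QQ" using d y unfolding xy K_def by (auto simp: HT_def)
        then show "x \<in> (HT N D ^^ n) QQ" using it(3) by blast
      qed
    qed
  next
    show "K \<subseteq> HT N D K"
    proof
      fix x assume x: "x \<in> K"
      have ex: "\<exists>d\<in>D. \<forall>n. x \<in> gsc_map N d ` ((HT N D ^^ n) QQ)"
      proof (rule ccontr)
        assume "\<not> ?thesis"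
        then have "\<forall>d\<in>D. \<exists>n. x \<notin> gsc_map N d ` ((HT N D ^^ n) QQ)" by blast
        then obtain f where f: "\<And>d. d \<in> D \<Longrightarrow> x \<notin> gsc_map N d ` ((HT N D ^^ f d) QQ)"
          by metis
        define m where "m = Max (f ` D)"
        have "x \<in> (HT N D ^^ Suc m) QQ" using x unfolding K_def by blast
        then obtain d where d: "d \<in> D" and xd: "x \<in> gsc_map N d ` ((HT N D ^^ m) QQ)"
          by (auto simp: HT_def)
        have "f d \<le> m" unfolding m_def using d D(2) by simp
        then have "(HT N D ^^ m) QQ \<subseteq> (HT N D ^^ f d) QQ" by (rule it(4))
        then show False using xd f[OF d] by blast
      qed
      then obtain d where d: "d \<in> D" and xd: "\<And>n. x \<in> gsc_map N d ` ((HT N D ^^ n) QQ)"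
        by blast
      obtain y0 where y0: "y0 \<in> (HT N D ^^ 0) QQ" "x = gsc_map N d y0" using xd[of 0] by blast
      have "y0 \<in> K" unfolding K_def
      proof
        fix n
        obtain y where "y \<in> (HT N D ^^ n) QQ" "x = gsc_map N d y" using xd[of n] by blast
        then show "y0 \<in> (HT N D ^^ n) QQ" using y0 gsc_map_inj[OF N] by metis
      qed
      then show "x \<in> HT N D K" using d y0 unfolding HT_def by blast
    qed
  qed
qed

lemma attractor_facts:
  assumes "gsc_digits N D"
  defines "F \<equiv> gsc_attractor N D"
  shows "compact F" "F \<noteq> {}" "HT N D F = F" "F \<subseteq> QQ"
proof -
  have N2: "N \<ge> 2" and D: "D \<subseteq> {0..<N}\<times>{0..<N}" and cD: "1 < card D"
    using assms(1) unfolding gsc_digits_def by auto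
  have fD: "finite D" using cD card.infinite by fastforce
  have nD: "D \<noteq> {}" using cD by auto
  have N: "N > 0" using N2 by simp
  define K where "K = (\<Inter>n. (HT N D ^^ n) QQ)"
  note E = existence[OF D fD nD N, folded K_def]
  have P: "\<And>G. compact G \<and> G \<noteq> {} \<and> G = (\<Union>i\<in>D. gsc_map N i ` G) \<longleftrightarrow>
      compact G \<and> G \<noteq> {} \<and> HT N D G = G"
    unfolding HT_def by auto
  have "F = K" unfolding F_def gsc_attractor_def P
  proof (rule the_equality)
    show "compact K \<and> K \<noteq> {} \<and> HT N D K = K" using E by simp
    fix G assume "compact G \<and> G \<noteq> {} \<and> HT N D G = G"
    then show "G = K" using unique_inv[OF N2] E by (metis subset_antisym)
  qed
  then show "compact F" "F \<noteq> {}" "HT N D F = F" "F \<subseteq> QQ" using E by auto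
qed

lemma fixed_in:
  assumes N2: "N \<ge> 2" and F: "compact F" "F \<noteq> {}" "HT N D F = F" and d: "d \<in> D"
  shows "(real (fst d) / (real N - 1), real (snd d) / (real N - 1)) \<in> F"
proof -
  define c where "c = (real (fst d) / (real N - 1), real (snd d) / (real N - 1))"
  have N1: "real N - 1 > 0" using N2 by simp
  have fc: "gsc_map N d c = c" unfolding c_def gsc_map_def using N1 N2
    by (auto simp: field_simps)
  have cF: "closed F" using F compact_imp_closed by auto
  obtain h where h: "h \<in> F" and hm: "\<And>y. y \<in> F \<Longrightarrow> dist c h \<le> dist c y"
    using distance_attains_inf[OF cF F(2)] by metis
  have "gsc_map N d h \<in> F" using F(3) d h unfolding HT_def by blast
  then have "dist c h \<le> dist c (gsc_map N d h)" by (rule hm)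
  also have "\<dots> = dist c h / real N" using gsc_map_dist[of N d c h] fc by simp
  finally have le: "dist c h \<le> dist c h / real N" .
  have "dist c h = 0"
  proof (rule ccontr)
    assume "dist c h \<noteq> 0"
    then have p: "dist c h > 0" by simp
    from le have a: "dist c h * real N \<le> dist c h" using N2 by (simp add: field_simps)
    have "dist c h * 2 \<le> dist c h * real N" using p N2 by (intro mult_left_mono) auto
    with a p show False by linarith
  qed
  then show ?thesis using h c_def by simp
qed


lemma step1:
  fixes u v :: real and I J :: nat
  assumes "0 \<le> u" "u \<le> 1" "0 \<le> v" "v \<le> 1" "u + real I = v + real J"
  shows "(I = J \<and> u = v) \<or> (J = I+1 \<and> u = 1 \<and> v = 0) \<or> (I = J+1 \<and> u = 0 \<and> v = 1)"
proof -
  have "real I \<le> real J + 1" "real J \<le> real I + 1" using assms by linarith+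
  then have "I \<le> J + 1" "J \<le> I + 1" by linarith+
  then have "I = J \<or> J = I + 1 \<or> I = J + 1" by arith
  then show ?thesis using assms by auto
qed

lemma lev:
  fixes x y :: real and a b i j N :: nat
  assumes N: "N \<ge> 2" and ab: "a < N" "b < N" and xy: "0 \<le> x" "x \<le> 1" "0 \<le> y" "y \<le> 1"
    and e: "(x + real a)/real N + real i = (y + real b)/real N + real j"
  shows "(i = j \<and> ((a = b \<and> x = y) \<or> (b = a+1 \<and> x=1 \<and> y=0) \<or> (a = b+1 \<and> x=0 \<and> y=1)))
   \<or> (j = i+1 \<and> a = N-1 \<and> b = 0 \<and> x = 1 \<and> y = 0)
   \<or> (i = j+1 \<and> a = 0 \<and> b = N-1 \<and> x = 0 \<and> y = 1)"
proof -
  have Np: "real N > 0" using N by simp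
  have ra: "real a + 1 \<le> real N" "real b + 1 \<le> real N" using ab by linarith+
  have u: "0 \<le> (x + real a)/real N" "(x + real a)/real N \<le> 1" using Np xy ra
    by (simp_all add: divide_simps)
  have v: "0 \<le> (y + real b)/real N" "(y + real b)/real N \<le> 1" using Np xy ra
    by (simp_all add: divide_simps)
  from step1[OF u v e] show ?thesis
  proof (elim disjE conjE)
    assume "i = j" "(x + real a)/real N = (y + real b)/real N"
    then have "x + real a = y + real b" using Np by (simp add: divide_cancel_right)
    then show ?thesis using step1[OF xy] \<open>i = j\<close> by auto
  next
    assume h: "j = i + 1" "(x + real a)/real N = 1" "(y + real b)/real N = 0"
    then have "x + real a = real N" "y + real b = 0" using Np by (simp_all add: divide_simps)
    then have "x = 1" "real a = real N - 1" "y = 0" "b = 0" using xy ra by linarith+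
    then have "a = N - 1" using N by linarith
    then show ?thesis using h(1) \<open>x=1\<close> \<open>y=0\<close> \<open>b=0\<close> by blast
  next
    assume h: "i = j + 1" "(x + real a)/real N = 0" "(y + real b)/real N = 1"
    then have "y + real b = real N" "x + real a = 0" using Np by (simp_all add: divide_simps)
    then have "y = 1" "real b = real N - 1" "x = 0" "a = 0" using xy ra by linarith+
    then have "b = N - 1" using N by linarith
    then show ?thesis using h \<open>y=1\<close> \<open>x=0\<close> \<open>a=0\<close> by simp
  qed
qed
lemma lev2:
  fixes x1 y1 x2 y2 :: real and a b i j N :: nat
  assumes N: "N \<ge> 2" and ab: "a < N" "b < N"
    and xy: "0 \<le> x1" "x1 \<le> 1" "0 \<le> y1" "y1 \<le> 1" "0 \<le> x2" "x2 \<le> 1" "0 \<le> y2" "y2 \<le> 1"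
    and e1: "(x1 + real a)/real N + real i = (y1 + real b)/real N + real j"
    and e2: "(x2 + real a)/real N + real i = (y2 + real b)/real N + real j"
  shows "(i \<noteq> j \<longrightarrow> x1 = x2 \<and> x1 + real i = y1 + real j \<and> x2 + real i = y2 + real j)
     \<and> (x1 = x2 \<or> (x1 + real i = y1 + real j \<and> x2 + real i = y2 + real j))"
  using lev[OF N ab xy(1-4) e1] lev[OF N ab xy(5-8) e2] by auto

lemma lev3:
  fixes x1 y1 x2 y2 :: real and a b a' b' i j N :: nat
  assumes N: "N \<ge> 2" and ab: "a < N" "b < N" "a' < N" "b' < N"
    and xy: "0 \<le> x1" "x1 \<le> 1" "0 \<le> y1" "y1 \<le> 1" "0 \<le> x2" "x2 \<le> 1" "0 \<le> y2" "y2 \<le> 1"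
    and eu: "x1 + real a = x2 + real a'" and ev: "y1 + real b = y2 + real b'"
    and e: "(x1 + real a)/real N + real i = (y1 + real b)/real N + real j"
  shows "(i \<noteq> j \<longrightarrow> a = a' \<and> b = b' \<and> x1 = x2 \<and> y1 = y2 \<and> x1 + real i = y1 + real j)
    \<and> (i = j \<longrightarrow> (a = a' \<and> b = b') \<or> (x1 = y1 \<and> x1 * real N \<noteq> x1 + real a)
          \<or> (x2 = y1 \<and> x2 * real N \<noteq> x1 + real a) \<or> (x1 = y2 \<and> x1 * real N \<noteq> x1 + real a))"
proof -
  have e2: "(x2 + real a')/real N + real i = (y2 + real b')/real N + real j" using e eu ev by simp
  note L1 = lev[OF N ab(1,2) xy(1-4) e] and L2 = lev[OF N ab(3,4) xy(5-8) e2]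
  have A: "i \<noteq> j \<longrightarrow> a = a' \<and> b = b' \<and> x1 = x2 \<and> y1 = y2 \<and> x1 + real i = y1 + real j"
    using L1 L2 by auto
  have B: "(a = a' \<and> b = b') \<or> (x1 = y1 \<and> x1 * real N \<noteq> x1 + real a)
          \<or> (x2 = y1 \<and> x2 * real N \<noteq> x1 + real a) \<or> (x1 = y2 \<and> x1 * real N \<noteq> x1 + real a)"
    if ij: "i = j"
  proof -
    have s1: "x1 + real a = y1 + real b" using e ij N by (simp add: divide_cancel_right)
    note S1 = step1[OF xy(1,2,5,6) eu] and S2 = step1[OF xy(3,4,7,8) ev]
      and S3 = step1[OF xy(1-4) s1]
    have r: "real a < real N" "real a' < real N" "real b < real N" "real b' < real N" using ab by simp_all
    show ?thesis
    proof (cases "a = a'")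
      case False
      from S1 show ?thesis
      proof (elim disjE conjE)
        assume "a = a'" with False show ?thesis by simp
      next
        assume h: "a' = a + 1" "x1 = 1" "x2 = 0"
        from S3 show ?thesis
        proof (elim disjE conjE)
          assume "a = b" "x1 = y1" then show ?thesis using h r by auto
        next
          assume "b = a + 1" "x1 = 1" "y1 = 0" then show ?thesis using h r by auto
        next
          assume "a = b + 1" "x1 = 0" "y1 = 1" then show ?thesis using h by simp
        qed
      next
        assume h: "a = a' + 1" "x1 = 0" "x2 = 1"
        from S3 show ?thesis
        proof (elim disjE conjE)
          assume "a = b" "x1 = y1" then show ?thesis using h r by auto
        next
          assume "b = a + 1" "x1 = 1" "y1 = 0" then show ?thesis using h by simp
        next
          assume "a = b + 1" "x1 = 0" "y1 = 1" then show ?thesis using h r by auto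
        qed
      qed
    next
      case True
      then have x12: "x1 = x2" using eu by simp
      show ?thesis
      proof (cases "b = b'")
        case True with \<open>a = a'\<close> show ?thesis by simp
      next
        case False
        have s5: "x1 + real a = y2 + real b'" using s1 ev by simp
        note S5 = step1[OF xy(1,2,7,8) s5]
        from S2 show ?thesis
        proof (elim disjE conjE)
          assume "b = b'" with False show ?thesis by simp
        next
          assume h: "b' = b + 1" "y1 = 1" "y2 = 0"
          from S5 show ?thesis
          proof (elim disjE conjE)
            assume "a = b'" "x1 = y2" then show ?thesis using h r s1 by auto
          next
            assume "b' = a + 1" "x1 = 1" "y2 = 0" then show ?thesis using h r s1 by auto
          next
            assume "a = b' + 1" "x1 = 0" "y2 = 1" then show ?thesis using h by simp
          qed
        next
          assume h: "b = b' + 1" "y1 = 0" "y2 = 1"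
          from S5 show ?thesis
          proof (elim disjE conjE)
            assume "a = b'" "x1 = y2" then show ?thesis using h r s1 by auto
          next
            assume "b' = a + 1" "x1 = 1" "y2 = 0" then show ?thesis using h by simp
          next
            assume "a = b' + 1" "x1 = 0" "y2 = 1" then show ?thesis using h r s1 by auto
          qed
        qed
      qed
    qed
  qed
  show ?thesis using A B by blast
qed

lemma lev4:
  fixes x y :: real and a b i j N :: nat
  assumes N: "N \<ge> 2" and ab: "a < N" "b < N" and xy: "0 \<le> x" "x \<le> 1" "0 \<le> y" "y \<le> 1"
    and e: "(x + real a)/real N + real i = (y + real b)/real N + real j"
    and ac: "a = 0 \<or> a = N - 1"
  shows "(i \<noteq> j \<longrightarrow> (b = 0 \<or> b = N - 1) \<and> real a / (real N - 1) + real i = y + real j)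
    \<and> (i = j \<longrightarrow> (b = 0 \<or> b = N - 1) \<or> (y = real a / (real N - 1) \<and> real a / (real N - 1) * real N \<noteq> x + real a))"
proof -
  have N1: "real N - 1 > 0" using N by simp
  define zc where "zc = real a / (real N - 1)"
  have z0: "a = 0 \<Longrightarrow> zc = 0" unfolding zc_def by simp
  have z1: "a = N - 1 \<Longrightarrow> zc = 1" unfolding zc_def using N1 N by (simp add: of_nat_diff)
  have "(i \<noteq> j \<longrightarrow> (b = 0 \<or> b = N - 1) \<and> zc + real i = y + real j)
    \<and> (i = j \<longrightarrow> (b = 0 \<or> b = N - 1) \<or> (y = zc \<and> zc * real N \<noteq> x + real a))"
  proof (cases "a = 0")
    case True
    then show ?thesis using lev[OF N ab xy e] z0 N by auto
  next
    case False
    then have a: "a = N - 1" using ac by simp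
    have ra: "real a = real N - 1" using a N by (simp add: of_nat_diff)
    show ?thesis using lev[OF N ab xy e] z1[OF a] a ra N ab by auto
  qed
  then show ?thesis unfolding zc_def .
qed

lemma comp_eq: "N > 0 \<Longrightarrow> gsc_map N i (gsc_map N a x) = gsc_map N j (gsc_map N b y) \<longleftrightarrow>
   (fst x + real (fst a))/real N + real (fst i) = (fst y + real (fst b))/real N + real (fst j) \<and>
   (snd x + real (snd a))/real N + real (snd i) = (snd y + real (snd b))/real N + real (snd j)"
  by (simp add: gsc_map_eq_iff) (simp add: gsc_map_def)

lemma corner_iff: "corner_digit N b \<longleftrightarrow> (fst b = 0 \<or> fst b = N - 1) \<and> (snd b = 0 \<or> snd b = N - 1)"
  by (cases b) (auto simp: corner_digit_def)

locale gscF =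
  fixes N :: nat and D :: "(nat\<times>nat) set" and F :: "(real\<times>real) set" and i j :: "nat\<times>nat"
  assumes N2: "2 \<le> N" and Dsub: "D \<subseteq> {0..<N}\<times>{0..<N}" and inv: "HT N D F = F"
    and box: "F \<subseteq> QQ"
    and fixp: "\<And>d. d \<in> D \<Longrightarrow> (real (fst d) / (real N - 1), real (snd d) / (real N - 1)) \<in> F"
    and ij: "i \<in> D" "j \<in> D" "i \<noteq> j"
begin

lemma N0: "N > 0" using N2 by simp

lemma FQ: "x \<in> F \<Longrightarrow> 0 \<le> fst x \<and> fst x \<le> 1 \<and> 0 \<le> snd x \<and> snd x \<le> 1"
  using box unfolding QQ_def by (cases x) auto

lemma DB: "d \<in> D \<Longrightarrow> fst d < N \<and> snd d < N"
  using Dsub by auto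

lemma decomp: "u \<in> F \<Longrightarrow> \<exists>a\<in>D. \<exists>x\<in>F. u = gsc_map N a x"
  using inv unfolding HT_def by blast

lemma img: "a \<in> D \<Longrightarrow> x \<in> F \<Longrightarrow> gsc_map N a x \<in> F"
  using inv unfolding HT_def by blast

lemma ij_coord: "fst i \<noteq> fst j \<or> snd i \<noteq> snd j"
  using ij(3) by (cases i, cases j) auto

abbreviation "S \<equiv> gsc_map N i ` F \<inter> gsc_map N j ` F"

lemma S_rep:
  assumes "p \<in> S"
  shows "\<exists>a b x y. a \<in> D \<and> b \<in> D \<and> x \<in> F \<and> y \<in> F \<and> p = gsc_map N i (gsc_map N a x)
     \<and> gsc_map N i (gsc_map N a x) = gsc_map N j (gsc_map N b y)"
proof -
  obtain u v where u: "u \<in> F" "p = gsc_map N i u" and v: "v \<in> F" "p = gsc_map N j v"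
    using assms by blast
  obtain a x where "a \<in> D" "x \<in> F" "u = gsc_map N a x" using decomp[OF u(1)] by blast
  moreover obtain b y where "b \<in> D" "y \<in> F" "v = gsc_map N b y" using decomp[OF v(1)] by blast
  ultimately show ?thesis using u v by metis
qed

lemma pair_ne: "(gsc_map N i \<circ> gsc_map N a) ` F \<inter> (gsc_map N j \<circ> gsc_map N b) ` F \<noteq> {} \<longleftrightarrow>
   (\<exists>x\<in>F. \<exists>y\<in>F. gsc_map N i (gsc_map N a x) = gsc_map N j (gsc_map N b y))"
  by (auto simp: comp_def) metis

lemma S_bounded: "bounded S"
proof -
  have "compact (gsc_map N i ` QQ)" unfolding QQ_def
    by (intro compact_continuous_image gsc_map_cont compact_Times compact_Icc)
  moreover have "S \<subseteq> gsc_map N i ` QQ" using box by auto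
  ultimately show ?thesis using compact_imp_bounded bounded_subset by blast
qed

lemma backdir:
  assumes u: "\<exists>!q. q \<in> D \<times> D \<and>
      (gsc_map N i \<circ> gsc_map N (fst q)) ` F \<inter> (gsc_map N j \<circ> gsc_map N (snd q)) ` F \<noteq> {}"
  shows "\<exists>p. S = {p}"
proof -
  obtain a b where ab: "a \<in> D" "b \<in> D"
    and ne: "(gsc_map N i \<circ> gsc_map N a) ` F \<inter> (gsc_map N j \<circ> gsc_map N b) ` F \<noteq> {}"
    and un: "\<And>a' b'. a' \<in> D \<Longrightarrow> b' \<in> D \<Longrightarrow>
      (gsc_map N i \<circ> gsc_map N a') ` F \<inter> (gsc_map N j \<circ> gsc_map N b') ` F \<noteq> {} \<Longrightarrow> a' = a \<and> b' = b"
  proof -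
    from u obtain q where q: "q \<in> D \<times> D \<and>
      (gsc_map N i \<circ> gsc_map N (fst q)) ` F \<inter> (gsc_map N j \<circ> gsc_map N (snd q)) ` F \<noteq> {}"
      and qu: "\<And>q'. q' \<in> D \<times> D \<and>
      (gsc_map N i \<circ> gsc_map N (fst q')) ` F \<inter> (gsc_map N j \<circ> gsc_map N (snd q')) ` F \<noteq> {} \<Longrightarrow> q' = q"
      by (elim ex1E) blast
    show ?thesis
    proof (rule that[of "fst q" "snd q"])
      fix a' b' assume "a' \<in> D" "b' \<in> D"
        "(gsc_map N i \<circ> gsc_map N a') ` F \<inter> (gsc_map N j \<circ> gsc_map N b') ` F \<noteq> {}"
      then have "(a', b') = q" using qu[of "(a',b')"] by simp
      then show "a' = fst q \<and> b' = snd q" by auto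
    qed (use q in auto)
  qed
  have rep: "\<exists>x y. x \<in> F \<and> y \<in> F \<and> p = gsc_map N i (gsc_map N a x)
     \<and> gsc_map N i (gsc_map N a x) = gsc_map N j (gsc_map N b y)" if p: "p \<in> S" for p
  proof -
    obtain a' b' x y where r: "a' \<in> D" "b' \<in> D" "x \<in> F" "y \<in> F" "p = gsc_map N i (gsc_map N a' x)"
      "gsc_map N i (gsc_map N a' x) = gsc_map N j (gsc_map N b' y)" using S_rep[OF p] by blast
    then have "a' = a \<and> b' = b" using un[OF r(1,2)] pair_ne by blast
    then show ?thesis using r by blast
  qed
  have abB: "fst a < N" "snd a < N" "fst b < N" "snd b < N" using DB ab by auto
  have key: "p = q \<or> dist p q \<le> diameter S / real N" if p: "p \<in> S" and q: "q \<in> S" for p q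
  proof -
    obtain x1 y1 where r1: "x1 \<in> F" "y1 \<in> F" "p = gsc_map N i (gsc_map N a x1)"
      "gsc_map N i (gsc_map N a x1) = gsc_map N j (gsc_map N b y1)" using rep[OF p] by blast
    obtain x2 y2 where r2: "x2 \<in> F" "y2 \<in> F" "q = gsc_map N i (gsc_map N a x2)"
      "gsc_map N i (gsc_map N a x2) = gsc_map N j (gsc_map N b y2)" using rep[OF q] by blast
    note c1 = r1(4)[unfolded comp_eq[OF N0]] and c2 = r2(4)[unfolded comp_eq[OF N0]]
    note f1 = FQ[OF r1(1)] FQ[OF r1(2)] FQ[OF r2(1)] FQ[OF r2(2)]
    have L1: "(fst i \<noteq> fst j \<longrightarrow> fst x1 = fst x2 \<and> fst x1 + real (fst i) = fst y1 + real (fst j) \<and> fst x2 + real (fst i) = fst y2 + real (fst j))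
     \<and> (fst x1 = fst x2 \<or> (fst x1 + real (fst i) = fst y1 + real (fst j) \<and> fst x2 + real (fst i) = fst y2 + real (fst j)))"
      by (rule lev2[OF N2 abB(1,3)]) (use f1 c1 c2 in auto)
    have L2: "(snd i \<noteq> snd j \<longrightarrow> snd x1 = snd x2 \<and> snd x1 + real (snd i) = snd y1 + real (snd j) \<and> snd x2 + real (snd i) = snd y2 + real (snd j))
     \<and> (snd x1 = snd x2 \<or> (snd x1 + real (snd i) = snd y1 + real (snd j) \<and> snd x2 + real (snd i) = snd y2 + real (snd j)))"
      by (rule lev2[OF N2 abB(2,4)]) (use f1 c1 c2 in auto)
    have "(fst x1 = fst x2 \<and> snd x1 = snd x2) \<or> (gsc_map N i x1 = gsc_map N j y1 \<and> gsc_map N i x2 = gsc_map N j y2)"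
      unfolding gsc_map_eq_iff[OF N0] using L1 L2 ij_coord by blast
    then have "x1 = x2 \<or> (gsc_map N i x1 = gsc_map N j y1 \<and> gsc_map N i x2 = gsc_map N j y2)"
      by (simp add: prod_eq_iff)
    then show ?thesis
    proof
      assume "x1 = x2" then show ?thesis using r1 r2 by simp
    next
      assume w: "gsc_map N i x1 = gsc_map N j y1 \<and> gsc_map N i x2 = gsc_map N j y2"
      have w1: "gsc_map N i x1 \<in> S" "gsc_map N i x2 \<in> S" using w r1(1,2) r2(1,2) by (metis IntI image_eqI)+
      have "dist p q = dist x1 x2 / real N / real N" unfolding r1(3) r2(3) by (simp add: gsc_map_dist)
      also have "\<dots> = dist (gsc_map N i x1) (gsc_map N i x2) / real N" by (simp add: gsc_map_dist)
      also have "\<dots> \<le> diameter S / real N"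
        using diameter_bounded_bound[OF S_bounded w1] N0 by (simp add: divide_right_mono)
      finally show ?thesis by simp
    qed
  qed
  obtain x0 y0 where xy0: "x0 \<in> F" "y0 \<in> F" "gsc_map N i (gsc_map N a x0) = gsc_map N j (gsc_map N b y0)"
    using ne pair_ne by blast
  define p0 where "p0 = gsc_map N i (gsc_map N a x0)"
  have p0: "p0 \<in> S" unfolding p0_def using xy0 img ab by (metis IntI image_eqI)
  have d0: "0 \<le> diameter S" using diameter_bounded_bound[OF S_bounded p0 p0] by simp
  have "diameter S \<le> diameter S / real N"
  proof (rule diameter_le)
    show "S \<noteq> {} \<or> 0 \<le> diameter S / real N" using p0 by blast
    fix p q assume "p \<in> S" "q \<in> S"
    then show "norm (p - q) \<le> diameter S / real N" using key[of p q] d0 N0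
      by (auto simp: dist_norm)
  qed
  then have "diameter S * real N \<le> diameter S" using N0 by (simp add: field_simps)
  moreover have "diameter S * 2 \<le> diameter S * real N" using d0 N2 by (intro mult_left_mono) auto
  ultimately have dz: "diameter S \<le> 0" using d0 by linarith
  have "S = {p0}"
  proof
    show "S \<subseteq> {p0}"
    proof
      fix q assume "q \<in> S"
      then have "dist q p0 \<le> 0" using diameter_bounded_bound[OF S_bounded _ p0] dz by (meson order_trans)
      then show "q \<in> {p0}" by simp
    qed
  qed (use p0 in blast)
  then show ?thesis by blast
qed

lemma sing_help:
  assumes Sp: "S = {p}" and a: "a \<in> D" and x1: "x1 \<in> F" and pu: "p = gsc_map N i (gsc_map N a x1)"
    and w: "w \<in> F" "w' \<in> F"
    and e1: "fst w + real (fst i) = fst w' + real (fst j)" and e2: "snd w + real (snd i) = snd w' + real (snd j)"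
  shows "fst w * real N = fst x1 + real (fst a) \<and> snd w * real N = snd x1 + real (snd a)"
proof -
  have "gsc_map N i w = gsc_map N j w'" using e1 e2 gsc_map_eq_iff[OF N0] by blast
  then have "gsc_map N i w \<in> S" using w by (metis IntI image_eqI)
  then have "gsc_map N i w = gsc_map N i (gsc_map N a x1)" using Sp pu by simp
  then have "w = gsc_map N a x1" using gsc_map_inj[OF N0] by blast
  then show ?thesis using N0 by (simp add: gsc_map_def)
qed

lemma fwd:
  assumes Sp: "S = {p}"
  shows "\<exists>!q. q \<in> D \<times> D \<and>
      (gsc_map N i \<circ> gsc_map N (fst q)) ` F \<inter> (gsc_map N j \<circ> gsc_map N (snd q)) ` F \<noteq> {}"
proof -
  obtain a b x1 y1 where r: "a \<in> D" "b \<in> D" "x1 \<in> F" "y1 \<in> F" "p = gsc_map N i (gsc_map N a x1)"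
     "gsc_map N i (gsc_map N a x1) = gsc_map N j (gsc_map N b y1)" using S_rep[of p] Sp by blast
  show ?thesis
  proof (rule ex1I[of _ "(a,b)"])
    show "(a, b) \<in> D \<times> D \<and> (gsc_map N i \<circ> gsc_map N (fst (a, b))) ` F \<inter> (gsc_map N j \<circ> gsc_map N (snd (a, b))) ` F \<noteq> {}"
      using r pair_ne by auto
  next
    fix q assume q: "q \<in> D \<times> D \<and>
      (gsc_map N i \<circ> gsc_map N (fst q)) ` F \<inter> (gsc_map N j \<circ> gsc_map N (snd q)) ` F \<noteq> {}"
    obtain a' b' where qab: "q = (a', b')" by (cases q)
    have a'b': "a' \<in> D" "b' \<in> D" using q qab by auto
    obtain x2 y2 where r2: "x2 \<in> F" "y2 \<in> F"
      "gsc_map N i (gsc_map N a' x2) = gsc_map N j (gsc_map N b' y2)"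
      using q qab pair_ne by auto
    have "gsc_map N i (gsc_map N a' x2) \<in> S" using r2 img a'b' by (metis IntI image_eqI)
    then have pp: "gsc_map N i (gsc_map N a' x2) = p" using Sp by simp
    have uu: "gsc_map N a x1 = gsc_map N a' x2" using pp r(5) gsc_map_inj[OF N0] by metis
    have vv: "gsc_map N b y1 = gsc_map N b' y2" using pp r(5,6) r2(3) gsc_map_inj[OF N0] by metis
    note eu = uu[unfolded gsc_map_eq_iff[OF N0]] and ev = vv[unfolded gsc_map_eq_iff[OF N0]]
    note c1 = r(6)[unfolded comp_eq[OF N0]]
    note f1 = FQ[OF r(3)] FQ[OF r(4)] FQ[OF r2(1)] FQ[OF r2(2)]
    have B: "fst a < N" "snd a < N" "fst b < N" "snd b < N" "fst a' < N" "snd a' < N" "fst b' < N" "snd b' < N"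
      using DB r(1,2) a'b' by auto
    have L1: "(fst i \<noteq> fst j \<longrightarrow> fst a = fst a' \<and> fst b = fst b' \<and> fst x1 = fst x2 \<and> fst y1 = fst y2 \<and> fst x1 + real (fst i) = fst y1 + real (fst j))
    \<and> (fst i = fst j \<longrightarrow> (fst a = fst a' \<and> fst b = fst b') \<or> (fst x1 = fst y1 \<and> fst x1 * real N \<noteq> fst x1 + real (fst a))
          \<or> (fst x2 = fst y1 \<and> fst x2 * real N \<noteq> fst x1 + real (fst a)) \<or> (fst x1 = fst y2 \<and> fst x1 * real N \<noteq> fst x1 + real (fst a)))"
      by (rule lev3[OF N2 B(1,3,5,7)]) (use f1 eu ev c1 in auto)
    have L2: "(snd i \<noteq> snd j \<longrightarrow> snd a = snd a' \<and> snd b = snd b' \<and> snd x1 = snd x2 \<and> snd y1 = snd y2 \<and> snd x1 + real (snd i) = snd y1 + real (snd j))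
    \<and> (snd i = snd j \<longrightarrow> (snd a = snd a' \<and> snd b = snd b') \<or> (snd x1 = snd y1 \<and> snd x1 * real N \<noteq> snd x1 + real (snd a))
          \<or> (snd x2 = snd y1 \<and> snd x2 * real N \<noteq> snd x1 + real (snd a)) \<or> (snd x1 = snd y2 \<and> snd x1 * real N \<noteq> snd x1 + real (snd a)))"
      by (rule lev3[OF N2 B(2,4,6,8)]) (use f1 eu ev c1 in auto)
    note H = sing_help[OF Sp r(1,3,5)]
    note H11 = H[OF r(3,4)] and H21 = H[OF r2(1) r(4)] and H12 = H[OF r(3) r2(2)]
    have "fst a = fst a' \<and> fst b = fst b' \<and> snd a = snd a' \<and> snd b = snd b'"
    proof (rule ccontr)
      assume nq: "\<not> ?thesis"
      show False
      proof (cases "fst a = fst a' \<and> fst b = fst b'")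
        case False
        then have fij: "fst i = fst j" using L1 by blast
        then have sij: "snd i \<noteq> snd j" using ij_coord by blast
        then have s: "snd x1 = snd x2" "snd y1 = snd y2" "snd x1 + real (snd i) = snd y1 + real (snd j)" using L2 by blast+
        have "(fst x1 = fst y1 \<and> fst x1 * real N \<noteq> fst x1 + real (fst a))
          \<or> (fst x2 = fst y1 \<and> fst x2 * real N \<noteq> fst x1 + real (fst a)) \<or> (fst x1 = fst y2 \<and> fst x1 * real N \<noteq> fst x1 + real (fst a))"
          using L1 fij False by blast
        then show False
        proof (elim disjE)
          assume "fst x1 = fst y1 \<and> fst x1 * real N \<noteq> fst x1 + real (fst a)"
          then show False using H11 s fij by auto
        next
          assume "fst x2 = fst y1 \<and> fst x2 * real N \<noteq> fst x1 + real (fst a)"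
          then show False using H21 s fij by auto
        next
          assume "fst x1 = fst y2 \<and> fst x1 * real N \<noteq> fst x1 + real (fst a)"
          then show False using H12 s fij by auto
        qed
      next
        case True
        then have F2: "\<not> (snd a = snd a' \<and> snd b = snd b')" using nq by blast
        then have fij: "snd i = snd j" using L2 by blast
        then have sij: "fst i \<noteq> fst j" using ij_coord by blast
        then have s: "fst x1 = fst x2" "fst y1 = fst y2" "fst x1 + real (fst i) = fst y1 + real (fst j)" using L1 by blast+
        have "(snd x1 = snd y1 \<and> snd x1 * real N \<noteq> snd x1 + real (snd a))
          \<or> (snd x2 = snd y1 \<and> snd x2 * real N \<noteq> snd x1 + real (snd a)) \<or> (snd x1 = snd y2 \<and> snd x1 * real N \<noteq> snd x1 + real (snd a))"
          using L2 fij F2 by blast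
        then show False
        proof (elim disjE)
          assume "snd x1 = snd y1 \<and> snd x1 * real N \<noteq> snd x1 + real (snd a)"
          then show False using H11 s fij by auto
        next
          assume "snd x2 = snd y1 \<and> snd x2 * real N \<noteq> snd x1 + real (snd a)"
          then show False using H21 s fij by auto
        next
          assume "snd x1 = snd y2 \<and> snd x1 * real N \<noteq> snd x1 + real (snd a)"
          then show False using H12 s fij by auto
        qed
      qed
    qed
    then show "q = (a, b)" using qab by (simp add: prod_eq_iff)
  qed
qed

lemma cornerpart:
  assumes Sp: "S = {p}" and ab: "a \<in> D" "b \<in> D"
    and ne: "(gsc_map N i \<circ> gsc_map N a) ` F \<inter> (gsc_map N j \<circ> gsc_map N b) ` F \<noteq> {}"
    and ca: "corner_digit N a"
  shows "corner_digit N b"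
proof -
  obtain x y where r: "x \<in> F" "y \<in> F" "gsc_map N i (gsc_map N a x) = gsc_map N j (gsc_map N b y)"
    using ne pair_ne by blast
  have "gsc_map N i (gsc_map N a x) \<in> S" using r img ab by (metis IntI image_eqI)
  then have pp: "p = gsc_map N i (gsc_map N a x)" using Sp by simp
  define z where "z = (real (fst a) / (real N - 1), real (snd a) / (real N - 1))"
  have zF: "z \<in> F" unfolding z_def using fixp[OF ab(1)] .
  have ac: "fst a = 0 \<or> fst a = N - 1" "snd a = 0 \<or> snd a = N - 1" using ca corner_iff by blast+
  note c1 = r(3)[unfolded comp_eq[OF N0]]
  note f1 = FQ[OF r(1)] FQ[OF r(2)]
  have B: "fst a < N" "snd a < N" "fst b < N" "snd b < N" using DB ab by auto
  have L1: "(fst i \<noteq> fst j \<longrightarrow> (fst b = 0 \<or> fst b = N - 1) \<and> real (fst a) / (real N - 1) + real (fst i) = fst y + real (fst j))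
    \<and> (fst i = fst j \<longrightarrow> (fst b = 0 \<or> fst b = N - 1) \<or> (fst y = real (fst a) / (real N - 1) \<and> real (fst a) / (real N - 1) * real N \<noteq> fst x + real (fst a)))"
    by (rule lev4[OF N2 B(1,3)]) (use f1 c1 ac in auto)
  have L2: "(snd i \<noteq> snd j \<longrightarrow> (snd b = 0 \<or> snd b = N - 1) \<and> real (snd a) / (real N - 1) + real (snd i) = snd y + real (snd j))
    \<and> (snd i = snd j \<longrightarrow> (snd b = 0 \<or> snd b = N - 1) \<or> (snd y = real (snd a) / (real N - 1) \<and> real (snd a) / (real N - 1) * real N \<noteq> snd x + real (snd a)))"
    by (rule lev4[OF N2 B(2,4)]) (use f1 c1 ac in auto)
  note H = sing_help[OF Sp ab(1) r(1) pp zF r(2)]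
  have "(fst b = 0 \<or> fst b = N - 1) \<and> (snd b = 0 \<or> snd b = N - 1)"
  proof (rule ccontr)
    assume nq: "\<not> ?thesis"
    show False
    proof (cases "fst b = 0 \<or> fst b = N - 1")
      case False
      then have fij: "fst i = fst j" using L1 by blast
      then have "snd i \<noteq> snd j" using ij_coord by blast
      then have s: "snd z + real (snd i) = snd y + real (snd j)" using L2 unfolding z_def by simp
      have o: "fst y = fst z" "fst z * real N \<noteq> fst x + real (fst a)" using L1 fij False unfolding z_def by auto
      have "fst z + real (fst i) = fst y + real (fst j)" using o fij by simp
      then show False using H s o by blast
    next
      case True
      then have F2: "\<not> (snd b = 0 \<or> snd b = N - 1)" using nq by blast
      then have fij: "snd i = snd j" using L2 by blast
      then have "fst i \<noteq> fst j" using ij_coord by blast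
      then have s: "fst z + real (fst i) = fst y + real (fst j)" using L1 unfolding z_def by simp
      have o: "snd y = snd z" "snd z * real N \<noteq> snd x + real (snd a)" using L2 fij F2 unfolding z_def by auto
      have "snd z + real (snd i) = snd y + real (snd j)" using o fij by simp
      then show False using H s o by blast
    qed
  qed
  then show ?thesis using corner_iff by blast
qed

end

theorem mainTheorem12:
  fixes N :: nat and D :: "(nat \<times> nat) set" and i j :: "nat \<times> nat"
  assumes "gsc_digits N D"
    and "connected (gsc_attractor N D)"
    and "i \<in> D" and "j \<in> D" and "i \<noteq> j"
  defines "F \<equiv> gsc_attractor N D"
  shows "((\<exists>p. gsc_map N i ` F \<inter> gsc_map N j ` F = {p}) \<longleftrightarrow>
           (\<exists>!q. q \<in> D \<times> D \<and>
              (gsc_map N i \<circ> gsc_map N (fst q)) ` F \<inter> (gsc_map N j \<circ> gsc_map N (snd q)) ` F \<noteq> {}))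
       \<and> ((\<exists>p. gsc_map N i ` F \<inter> gsc_map N j ` F = {p}) \<longrightarrow>
           (\<forall>i' j'. i' \<in> D \<and> j' \<in> D \<and>
              (gsc_map N i \<circ> gsc_map N i') ` F \<inter> (gsc_map N j \<circ> gsc_map N j') ` F \<noteq> {} \<and>
              corner_digit N i' \<longrightarrow> corner_digit N j'))"
  proof -
  have N2: "2 \<le> N" and Dsub: "D \<subseteq> {0..<N}\<times>{0..<N}" using assms(1) unfolding gsc_digits_def by auto
  note AF = attractor_facts[OF assms(1), folded F_def]
  interpret gscF N D F i j
  proof (unfold_locales)
    show "2 \<le> N" by (rule N2)
    show "D \<subseteq> {0..<N}\<times>{0..<N}" by (rule Dsub)
    show "HT N D F = F" by (rule AF(3))
    show "F \<subseteq> QQ" by (rule AF(4))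
    show "\<And>d. d \<in> D \<Longrightarrow> (real (fst d) / (real N - 1), real (snd d) / (real N - 1)) \<in> F"
      using fixed_in[OF N2 AF(1,2,3)] by blast
    show "i \<in> D" "j \<in> D" "i \<noteq> j" by (rule assms)+
  qed
  show ?thesis
  proof (intro conjI)
    show "(\<exists>p. S = {p}) \<longleftrightarrow> (\<exists>!q. q \<in> D \<times> D \<and>
              (gsc_map N i \<circ> gsc_map N (fst q)) ` F \<inter> (gsc_map N j \<circ> gsc_map N (snd q)) ` F \<noteq> {})"
    proof
      assume "\<exists>p. S = {p}"
      then obtain p where "S = {p}" by blast
      then show "\<exists>!q. q \<in> D \<times> D \<and>
              (gsc_map N i \<circ> gsc_map N (fst q)) ` F \<inter> (gsc_map N j \<circ> gsc_map N (snd q)) ` F \<noteq> {}"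
        by (rule fwd)
    qed (rule backdir)
    show "(\<exists>p. S = {p}) \<longrightarrow> (\<forall>i' j'. i' \<in> D \<and> j' \<in> D \<and>
              (gsc_map N i \<circ> gsc_map N i') ` F \<inter> (gsc_map N j \<circ> gsc_map N j') ` F \<noteq> {} \<and>
              corner_digit N i' \<longrightarrow> corner_digit N j')"
    proof (intro impI allI)
      fix i' j' assume "\<exists>p. S = {p}"
      then obtain p where Sp: "S = {p}" by blast
      assume h: "i' \<in> D \<and> j' \<in> D \<and>
              (gsc_map N i \<circ> gsc_map N i') ` F \<inter> (gsc_map N j \<circ> gsc_map N j') ` F \<noteq> {} \<and>
              corner_digit N i'"
      show "corner_digit N j'"
        using cornerpart[OF Sp] h by blast
    qed
  qed
qed


end
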